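(* Let $\mathcal{I}\in\mathrm{Ins}(\Omega,\mathcal{H},\mathcal{K})$ be an instrument. Then any two complementary instruments of $\mathcal{I}$, relative to any two dilations of $\mathcal{I}$, are postprocessing equivalent.
   Context: All Hilbert spaces are finite-dimensional and complex, and all outcome sets are finite. A POVM $\mathsf{E}\in\mathcal{O}(\Omega,\mathcal{H})$ is a map $x\mapsto \mathsf{E}(x)$ from $\Omega$ to positive operators with $\sum_x\mathsf{E}(x)=I$. An instrument $\mathcal{I}\in\mathrm{Ins}(\Omega,\mathcal{H},\mathcal{K})$ is a family $(\mathcal{I}_x)_{x\in\Omega}$ of completely positive trace-nonincreasing linear maps $\mathcal{L}(\mathcal{H})\to\mathcal{L}(\mathcal{K})$ whose sum is trace preserving. A dilation of $\mathcal{I}$ is a triple $(\mathcal{H}_A,W,\mathsf{E})$ with $\mathcal{H}_A$ a Hilbert space, $W:\mathcal{H}\to\mathcal{H}_A\otimes\mathcal{K}$ an isometry and $\mathsf{E}\in\mathcal{O}(\Omega,\mathcal{H}_A)$, such that $\mathcal{I}_x(\varrho)=\mathrm{tr}_{\mathcal{H}_A}[W\varrho W^*(\mathsf{E}(x)\otimes I_{\mathcal{K}})]$ for all $x$ and states $\varrho$. The complementary instrument relative to this dilation is $\mathcal{I}^C\in\mathrm{Ins}(\Omega,\mathcal{H},\mathcal{H}_A)$, $\mathcal{I}^C_x(\varrho)=\mathrm{tr}_{\mathcal{K}}[(\sqrt{\mathsf{E}(x)}\otimes I_{\mathcal{K}})W\varrho W^*(\sqrt{\mathsf{E}(x)}\otimes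 I_{\mathcal{K}})]$. For instruments $\mathcal{I}\in\mathrm{Ins}(\Omega,\mathcal{H},\mathcal{K})$ and $\mathcal{J}\in\mathrm{Ins}(\Lambda,\mathcal{H},\mathcal{V})$, $\mathcal{I}\preceq\mathcal{J}$ (postprocessing) if there exist instruments $\mathcal{R}^{(y)}\in\mathrm{Ins}(\Omega,\mathcal{V},\mathcal{K})$, $y\in\Lambda$, with $\mathcal{I}_x=\sum_y\mathcal{R}^{(y)}_x\circ\mathcal{J}_y$ for all $x$; they are postprocessing equivalent if $\mathcal{I}\preceq\mathcal{J}$ and $\mathcal{J}\preceq\mathcal{I}$. *)

theory Defs
  imports "HOL-Analysis.Analysis" "HOL-Library.Complex_Order"
begin

text \<open>Finite-dimensional complex Hilbert spaces are modelled as C^'n for a finite type 'n;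
  operators from C^'n to C^'m are matrices of type complex^'n^'m. The tensor product of
  C^'a and C^'k is C^('a \<times> 'k).\<close>

definition adj :: "complex^'n^'m \<Rightarrow> complex^'m^'n" where
  "adj A = (\<chi> i j. cnj (A $ j $ i))"

definition cscale :: "complex \<Rightarrow> complex^'n^'m \<Rightarrow> complex^'n^'m" where
  "cscale c A = (\<chi> i j. c * A $ i $ j)"

definition psd :: "complex^'n^'n \<Rightarrow> bool" where
  "psd A \<longleftrightarrow> (\<forall>v :: complex^'n. 0 \<le> (\<Sum>i\<in>UNIV. cnj (v $ i) * (A *v v) $ i))"

definition density :: "complex^'n^'n \<Rightarrow> bool" where
  "density \<rho> \<longleftrightarrow> psd \<rho> \<and> trace \<rho> = 1"

definition isometry :: "complex^'n^'m \<Rightarrow> bool" where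
  "isometry W \<longleftrightarrow> adj W ** W = mat 1"

definition psd_sqrt :: "complex^'n^'n \<Rightarrow> complex^'n^'n" where
  "psd_sqrt A = (THE B. psd B \<and> B ** B = A)"

definition kron :: "complex^'b^'a \<Rightarrow> complex^'d^'c \<Rightarrow> complex^('b \<times> 'd)^('a \<times> 'c)" where
  "kron A B = (\<chi> p q. A $ fst p $ fst q * B $ snd p $ snd q)"

definition ptrace1 :: "complex^('a::finite \<times> 'k::finite)^('a \<times> 'k) \<Rightarrow> complex^'k^'k" where
  "ptrace1 M = (\<chi> k l. \<Sum>a\<in>UNIV. M $ (a, k) $ (a, l))"

definition ptrace2 :: "complex^('a::finite \<times> 'k::finite)^('a \<times> 'k) \<Rightarrow> complex^'a^'a" where
  "ptrace2 M = (\<chi> a b. \<Sum>k\<in>UNIV. M $ (a, k) $ (b, k))"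

definition clinear_map :: "(complex^'n^'n \<Rightarrow> complex^'m^'m) \<Rightarrow> bool" where
  "clinear_map \<Phi> \<longleftrightarrow> (\<forall>A B. \<Phi> (A + B) = \<Phi> A + \<Phi> B) \<and> (\<forall>c A. \<Phi> (cscale c A) = cscale c (\<Phi> A))"

text \<open>Complete positivity: for every k, the ampliation id_k \<otimes> \<Phi> maps positive operators on
  C^k \<otimes> H (written as k\<times>k block matrices (X i j), i,j<k, with blocks in L(H)) to positive
  operators on C^k \<otimes> K.\<close>
definition block_psd :: "nat \<Rightarrow> (nat \<Rightarrow> nat \<Rightarrow> complex^'n^'n) \<Rightarrow> bool" where
  "block_psd k X \<longleftrightarrow> (\<forall>v :: nat \<Rightarrow> complex^'n.
     0 \<le> (\<Sum>i<k. \<Sum>j<k. \<Sum>r\<in>UNIV. cnj (v i $ r) * (X i j *v v j) $ r))"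

definition completely_positive :: "(complex^'n^'n \<Rightarrow> complex^'m^'m) \<Rightarrow> bool" where
  "completely_positive \<Phi> \<longleftrightarrow>
     (\<forall>k X. block_psd k X \<longrightarrow> block_psd k (\<lambda>i j. \<Phi> (X i j)))"

definition povm :: "('x::finite \<Rightarrow> complex^'a^'a) \<Rightarrow> bool" where
  "povm E \<longleftrightarrow> (\<forall>x. psd (E x)) \<and> (\<Sum>x\<in>UNIV. E x) = mat 1"

definition instrument :: "('x::finite \<Rightarrow> complex^'h^'h \<Rightarrow> complex^'k^'k) \<Rightarrow> bool" where
  "instrument I \<longleftrightarrow>
     (\<forall>x. clinear_map (I x) \<and> completely_positive (I x)
          \<and> (\<forall>\<rho>. psd \<rho> \<longrightarrow> trace (I x \<rho>) \<le> trace \<rho>))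
     \<and> (\<forall>\<rho>. trace (\<Sum>x\<in>UNIV. I x \<rho>) = trace \<rho>)"

definition dilation ::
  "('x::finite \<Rightarrow> complex^'h^'h \<Rightarrow> complex^'k^'k) \<Rightarrow> complex^'h^('a \<times> 'k) \<Rightarrow> ('x \<Rightarrow> complex^'a^'a) \<Rightarrow> bool" where
  "dilation I W E \<longleftrightarrow> isometry W \<and> povm E \<and>
     (\<forall>x \<rho>. density \<rho> \<longrightarrow> I x \<rho> = ptrace1 (W ** \<rho> ** adj W ** kron (E x) (mat 1)))"

definition complementary ::
  "complex^'h^('a::finite \<times> 'k::finite) \<Rightarrow> ('x \<Rightarrow> complex^'a^'a) \<Rightarrow> 'x \<Rightarrow> complex^'h^'h \<Rightarrow> complex^'a^'a" where
  "complementary W E x \<rho> =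
     ptrace2 (kron (psd_sqrt (E x)) (mat 1 :: complex^'k^'k) ** W ** \<rho> ** adj W
              ** kron (psd_sqrt (E x)) (mat 1 :: complex^'k^'k))"

definition postproc ::
  "('x::finite \<Rightarrow> complex^'h^'h \<Rightarrow> complex^'k^'k) \<Rightarrow> ('y::finite \<Rightarrow> complex^'h^'h \<Rightarrow> complex^'v^'v) \<Rightarrow> bool" where
  "postproc I J \<longleftrightarrow> (\<exists>R :: 'y \<Rightarrow> 'x \<Rightarrow> complex^'v^'v \<Rightarrow> complex^'k^'k.
     (\<forall>y. instrument (R y)) \<and> (\<forall>x. I x = (\<lambda>\<rho>. \<Sum>y\<in>UNIV. R y x (J y \<rho>))))"

definition postproc_equiv ::
  "('x::finite \<Rightarrow> complex^'h^'h \<Rightarrow> complex^'k^'k) \<Rightarrow> ('y::finite \<Rightarrow> complex^'h^'h \<Rightarrow> complex^'v^'v) \<Rightarrow> bool" where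
  "postproc_equiv I J \<longleftrightarrow> postproc I J \<and> postproc J I"

end

theory Submission
  imports Defs
begin



definition ip :: "complex^'n \<Rightarrow> complex^'n \<Rightarrow> complex" where
  "ip u w = (\<Sum>i\<in>UNIV. cnj (u$i) * w$i)"

definition outer :: "complex^'m \<Rightarrow> complex^'n \<Rightarrow> complex^'n^'m" where
  "outer x y = (\<chi> i j. x$i * cnj (y$j))"

lemma ip_add_right: "ip u (v + w) = ip u v + ip u w"
  by (simp add: ip_def algebra_simps sum.distrib)
lemma ip_add_left: "ip (u + v) w = ip u w + ip v w"
  by (simp add: ip_def algebra_simps sum.distrib)
lemma ip_diff_right: "ip u (v - w) = ip u v - ip u w"
  by (simp add: ip_def algebra_simps sum_subtractf)
lemma ip_diff_left: "ip (u - v) w = ip u w - ip v w"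
  by (simp add: ip_def algebra_simps sum_subtractf)
lemma ip_scale_right: "ip u (c *s w) = c * ip u w"
  by (simp add: ip_def sum_distrib_left algebra_simps)
lemma ip_scale_left: "ip (c *s u) w = cnj c * ip u w"
  by (simp add: ip_def sum_distrib_left algebra_simps)
lemma ip_zero_right[simp]: "ip u 0 = 0" by (simp add: ip_def)
lemma ip_zero_left[simp]: "ip 0 u = 0" by (simp add: ip_def)
lemma ip_sum_right: "ip u (\<Sum>b\<in>B. f b) = (\<Sum>b\<in>B. ip u (f b))"
  by (induct B rule: infinite_finite_induct) (auto simp: ip_add_right)
lemma ip_sum_left: "ip (\<Sum>b\<in>B. f b) u = (\<Sum>b\<in>B. ip (f b) u)"
  by (induct B rule: infinite_finite_induct) (auto simp: ip_add_left)
lemma cnj_ip: "cnj (ip u w) = ip w u"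
  by (simp add: ip_def mult.commute)

lemma ip_adj_left: "ip (adj A *v u) w = ip u (A *v w)"
proof -
  have "ip (adj A *v u) w = (\<Sum>i\<in>UNIV. \<Sum>j\<in>UNIV. cnj (u$j) * A$j$i * w$i)"
    by (simp add: ip_def adj_def matrix_vector_mult_def sum_distrib_right sum_distrib_left mult_ac)
  also have "\<dots> = (\<Sum>j\<in>UNIV. \<Sum>i\<in>UNIV. cnj (u$j) * A$j$i * w$i)"
    by (rule sum.swap)
  also have "\<dots> = ip u (A *v w)"
    by (simp add: ip_def matrix_vector_mult_def sum_distrib_left mult_ac)
  finally show ?thesis .
qed

lemma ip_adj_right: "ip u (adj A *v w) = ip (A *v u) w"
  by (metis cnj_ip ip_adj_left)

lemma adj_adj[simp]: "adj (adj A) = A"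
  by (simp add: adj_def vec_eq_iff)

lemma adj_mult: "adj (A ** B) = adj B ** adj A"
  by (simp add: adj_def vec_eq_iff matrix_matrix_mult_def mult.commute)

lemma adj_add: "adj (A + B) = adj A + adj B"
  by (simp add: adj_def vec_eq_iff)
lemma adj_diff: "adj (A - B) = adj A - adj B"
  by (simp add: adj_def vec_eq_iff)
lemma adj_mat1[simp]: "adj (mat 1) = mat 1"
  by (simp add: adj_def vec_eq_iff mat_def)
lemma adj_zero[simp]: "adj 0 = 0"
  by (simp add: adj_def vec_eq_iff)
lemma adj_sum: "adj (\<Sum>b\<in>B. f b) = (\<Sum>b\<in>B. adj (f b))"
  by (induct B rule: infinite_finite_induct) (auto simp: adj_add)

lemma outer_mult: "outer x y *v z = ip y z *s x"
  by (simp add: outer_def ip_def vec_eq_iff matrix_vector_mult_def sum_distrib_left mult_ac)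

lemma adj_outer: "adj (outer x y) = outer y x"
  by (simp add: adj_def outer_def vec_eq_iff)

lemma sum_mult_vec: "(\<Sum>b\<in>B. f b) *v z = (\<Sum>b\<in>B. f b *v z)"
  by (induct B rule: infinite_finite_induct) (auto simp: matrix_vector_mult_add_rdistrib)

lemma cnj_mult_self: "cnj z * z = complex_of_real ((cmod z)^2)"
  by (subst complex_norm_square) (simp add: mult.commute)
lemma ip_self: "ip v v = of_real (\<Sum>i\<in>UNIV. (cmod (v$i))^2)"
  unfolding ip_def of_real_sum by (rule sum.cong) (rule refl, rule cnj_mult_self)
lemma ip_self_nonneg: "Re (ip v v) \<ge> 0" "Im (ip v v) = 0"
  unfolding ip_self by (simp_all only: Re_complex_of_real Im_complex_of_real) (auto intro: sum_nonneg)
lemma ip_self_zero: "ip v v = 0 \<longleftrightarrow> v = 0"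
proof
  assume "ip v v = 0"
  then have "(\<Sum>i\<in>UNIV. (cmod (v$i))^2) = 0" by (metis ip_self of_real_eq_0_iff)
  then have "\<forall>i\<in>UNIV. (cmod (v$i))^2 = 0"
    by (subst (asm) sum_nonneg_eq_0_iff) auto
  then show "v = 0" by (simp add: vec_eq_iff)
qed simp

lemma ip_eq_vec: "(\<And>u. ip u v = ip u w) \<Longrightarrow> v = w"
  by (metis diff_eq_eq diff_self ip_diff_right ip_self_zero add_0)

lemma ip_norm: "ip v v = of_real ((norm v)^2)"
proof -
  have "(norm v)^2 = (\<Sum>i\<in>UNIV. (cmod (v$i))^2)"
    unfolding norm_vec_def L2_set_def by (subst real_sqrt_pow2) (auto intro: sum_nonneg)
  then show ?thesis by (simp only: ip_self)
qed

lemma matrix_eq_ip: "(\<And>v. (A::complex^'n^'m) *v v = B *v v) \<Longrightarrow> A = B"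
  using matrix_eq by blast




lemma psd_ip: "psd A \<longleftrightarrow> (\<forall>v. 0 \<le> ip v (A *v v))"
  by (simp add: psd_def ip_def)

lemma cle0: "(0::complex) \<le> z \<longleftrightarrow> Re z \<ge> 0 \<and> Im z = 0"
  by (auto simp: less_eq_complex_def)

lemma mv_scale: "A *v (c *s v) = c *s (A *v (v::complex^'n))"
  by (simp add: vec_eq_iff matrix_vector_mult_def sum_distrib_left mult_ac)

lemma mv_add: "A *v (u + v) = A *v u + A *v (v::complex^'n)"
  by (simp add: matrix_vector_right_distrib)

lemma mv_diff: "A *v (u - v) = A *v u - A *v (v::complex^'n)"
  by (simp add: vec_eq_iff matrix_vector_mult_def sum_subtractf algebra_simps)

lemma herm_of_real_form:
  fixes A :: "complex^'n^'n"
  assumes r: "\<And>v. Im (ip v (A *v v)) = 0"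
  shows "adj A = A"
proof -
  have key: "ip (A *v u) w = ip u (A *v w)" for u w
  proof -
    define a where "a = ip u (A *v w)"
    define b where "b = ip w (A *v u)"
    have e1: "ip (u + w) (A *v (u + w)) = ip u (A *v u) + a + b + ip w (A *v w)"
      by (simp add: a_def b_def mv_add ip_add_left ip_add_right)
    have e2: "ip (u + \<i> *s w) (A *v (u + \<i> *s w)) = ip u (A *v u) + \<i> * a - \<i> * b + ip w (A *v w)"
      by (simp add: a_def b_def mv_add mv_scale ip_add_left ip_add_right ip_scale_left ip_scale_right algebra_simps)
    have "Im (a + b) = 0" using r[of "u+w"] r[of u] r[of w] e1 by simp
    moreover have "Re (a - b) = 0" using r[of "u + \<i> *s w"] r[of u] r[of w] e2 by simp
    ultimately have "b = cnj a" by (simp add: complex_eq_iff)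
    then show ?thesis by (metis a_def b_def cnj_ip complex_cnj_cnj)
  qed
  show ?thesis
    by (rule matrix_eq_ip, rule ip_eq_vec) (simp add: ip_adj_right key)
qed

lemma psd_herm: "psd A \<Longrightarrow> adj A = A"
  by (rule herm_of_real_form) (simp add: psd_ip cle0)

lemma real_L:
  fixes a C :: real
  assumes "\<And>t. 2*t*a \<le> t^2*C"
  shows "a = 0"
proof (rule ccontr)
  assume a: "a \<noteq> 0"
  define k where "k = \<bar>C\<bar>+1"
  have p: "k > 0" by (simp add: k_def)
  define t where "t = a / k"
  have "2*t*a \<le> t^2*C" by (rule assms)
  moreover have "2*t*a = 2*a^2/k" "t^2*C = a^2*C/k^2" by (simp_all add: t_def power2_eq_square)
  ultimately have "2*a^2/k \<le> a^2*C/k^2" by simp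
  then have "(2*a^2/k)*k^2 \<le> (a^2*C/k^2)*k^2" by (rule mult_right_mono) simp
  then have "a^2*(2*k) \<le> a^2*C" using p by (simp add: field_simps power2_eq_square)
  moreover have "a^2 > 0" using a by simp
  ultimately have "2*k \<le> C" by simp
  then show False by (simp add: k_def)
qed

lemma ip_real_scale: "ip (of_real t *s u) w = of_real t * ip u w"
  by (simp add: ip_scale_left)

lemma psd_zero_form:
  assumes B: "psd B" and d: "ip d (B *v d) = 0"
  shows "B *v d = 0"
proof -
  define u where "u = B *v d"
  have h: "adj B = B" using psd_herm B by blast
  have x1: "ip d (B *v u) = ip u u"
    by (metis h ip_adj_left u_def)
  have "- Re (ip u u) = 0"
  proof (rule real_L[where C = "Re (ip u (B *v u))"])
    fix t :: real
    have "0 \<le> ip (d + of_real t *s u) (B *v (d + of_real t *s u))"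
      using B psd_ip by blast
    also have "ip (d + of_real t *s u) (B *v (d + of_real t *s u))
        = ip d (B *v d) + of_real t * ip d (B *v u) + of_real t * ip u (B *v d)
          + of_real t * of_real t * ip u (B *v u)"
      by (simp add: mv_add mv_scale ip_add_left ip_add_right ip_scale_left ip_scale_right algebra_simps)
    finally have "0 \<le> Re (of_real t * ip u u + of_real t * ip u u + of_real t * of_real t * ip u (B *v u))"
      using d x1 u_def by (simp add: cle0)
    then show "2 * t * - Re (ip u u) \<le> t^2 * Re (ip u (B *v u))"
      by (simp add: power2_eq_square)
  qed
  then have "ip u u = 0" using ip_self_nonneg[of u] by (simp add: complex_eq_iff)
  then show ?thesis using ip_self_zero u_def by blast
qed

lemma ip_axis: "ip (axis i 1) w = w$i"
proof -
  have "ip (axis i 1) w = (\<Sum>j\<in>UNIV. if j = i then w$j else 0)"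
    unfolding ip_def axis_def by (rule sum.cong) auto
  then show ?thesis by simp
qed
lemma mv_axis: "(X *v axis i 1)$j = X$j$(i::'n::finite)"
proof -
  have "(X *v axis i 1)$j = (\<Sum>k\<in>UNIV. if k = i then X$j$k else 0)"
    unfolding matrix_vector_mult_def axis_def vec_lambda_beta by (rule sum.cong) auto
  then show ?thesis by simp
qed

lemma trace_ip: "trace (X::complex^'n^'n) = (\<Sum>i\<in>UNIV. ip (axis i 1) (X *v axis i 1))"
  by (simp add: trace_def ip_axis mv_axis)

lemma mat_eq_cols: "(\<And>i. (X::complex^'n^'m) *v axis i 1 = Y *v axis i 1) \<Longrightarrow> X = Y"
  by (metis mv_axis vec_eq_iff)

lemma mm_diff_rdistrib: "((A::complex^'n^'m) - B) ** C = A ** C - B ** C"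
  by (simp add: vec_eq_iff matrix_matrix_mult_def sum_subtractf algebra_simps)
lemma mm_diff_ldistrib: "(C::complex^'n^'m) ** (A - B) = C ** A - C ** B"
  by (simp add: vec_eq_iff matrix_matrix_mult_def sum_subtractf algebra_simps)
lemma mm_add_rdistrib: "((A::complex^'n^'m) + B) ** C = A ** C + B ** C"
  by (simp add: vec_eq_iff matrix_matrix_mult_def sum.distrib algebra_simps)

lemma psd_sqrt_unique:
  fixes B C :: "complex^'n^'n"
  assumes B: "psd B" and C: "psd C" and eq: "B ** B = C ** C"
  shows "B = C"
proof -
  define D where "D = B - C"
  have hB: "adj B = B" using psd_herm B by blast
  have hC: "adj C = C" using psd_herm C by blast
  have hD: "adj D = D" by (simp add: D_def adj_diff hB hC)
  have "B ** D + D ** C = B ** B - C ** C"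
    by (simp add: D_def matrix_add_ldistrib vec_eq_iff matrix_matrix_mult_def sum_subtractf algebra_simps)
  then have z: "B ** D + D ** C = 0" using eq by simp
  have "D ** B ** D + D ** D ** C = D ** (B ** D + D ** C)"
    by (simp add: matrix_add_ldistrib matrix_mul_assoc)
  then have "D ** B ** D + D ** D ** C = 0" using z by simp
  then have "trace (D ** B ** D) + trace (D ** D ** C) = 0"
    by (metis trace_add trace_0 mat_0)
  moreover have "trace (D ** D ** C) = trace (D ** C ** D)"
    by (metis matrix_mul_assoc trace_mul_sym)
  ultimately have tz: "trace (D ** B ** D) + trace (D ** C ** D) = 0" by simp
  have tf: "trace (D ** X ** D) = (\<Sum>i\<in>UNIV. ip (D *v axis i 1) (X *v (D *v axis i 1)))" for X
    unfolding trace_ip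
  proof (rule sum.cong)
    fix i :: 'n
    let ?e = "axis i 1 :: complex^'n"
    have "ip (D *v ?e) (X *v (D *v ?e)) = ip ?e (adj D *v (X *v (D *v ?e)))"
      by (rule ip_adj_right[symmetric])
    also have "\<dots> = ip ?e ((D ** X ** D) *v ?e)" by (simp add: hD matrix_vector_mul_assoc matrix_mul_assoc)
    finally show "ip ?e ((D ** X ** D) *v ?e) = ip (D *v ?e) (X *v (D *v ?e))" by simp
  qed simp
  have nn: "0 \<le> ip (D *v axis i 1) (X *v (D *v axis i 1))" if "psd X" for X i
    using that psd_ip by blast
  have zz: "\<forall>i. ip (D *v axis i 1) (B *v (D *v axis i 1)) = 0 \<and> ip (D *v axis i 1) (C *v (D *v axis i 1)) = 0"
  proof -
    let ?f = "\<lambda>i. Re (ip (D *v axis i 1) (B *v (D *v axis i 1)))"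
    let ?g = "\<lambda>i. Re (ip (D *v axis i 1) (C *v (D *v axis i 1)))"
    have f0: "\<And>i. ?f i \<ge> 0" "\<And>i. ?g i \<ge> 0" using nn[OF B] nn[OF C] by (auto simp: cle0)
    have "(\<Sum>i\<in>UNIV. ?f i) + (\<Sum>i\<in>UNIV. ?g i) = 0"
      using arg_cong[OF tz, of Re] by (simp add: tf)
    moreover have "(\<Sum>i\<in>UNIV. ?f i) \<ge> 0" "(\<Sum>i\<in>UNIV. ?g i) \<ge> 0" using f0 by (auto intro: sum_nonneg)
    ultimately have "(\<Sum>i\<in>UNIV. ?f i) = 0" "(\<Sum>i\<in>UNIV. ?g i) = 0" by linarith+
    then have "\<forall>i. ?f i = 0" "\<forall>i. ?g i = 0" using f0 by (simp_all add: sum_nonneg_eq_0_iff)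
    then show ?thesis using nn[OF B] nn[OF C] by (auto simp: cle0 complex_eq_iff)
  qed
  have BD: "B ** D = 0"
    by (rule mat_eq_cols) (metis zz psd_zero_form[OF B] matrix_vector_mul_assoc times0_left matrix_vector_mult_0_right times0_right matrix_vector_mult_0)
  have CD: "C ** D = 0"
    by (rule mat_eq_cols) (metis zz psd_zero_form[OF C] matrix_vector_mul_assoc times0_left matrix_vector_mult_0_right times0_right matrix_vector_mult_0)
  have "D ** D = B ** D - C ** D" by (simp add: D_def mm_diff_rdistrib)
  then have DD: "D ** D = 0" using BD CD by simp
  have "D *v z = 0" for z
  proof -
    have "ip (D *v z) (D *v z) = ip z ((D ** D) *v z)"
      by (metis hD ip_adj_left matrix_vector_mul_assoc)
    then have "ip (D *v z) (D *v z) = 0" using DD by (simp add: matrix_vector_mult_0)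
    then show ?thesis using ip_self_zero by blast
  qed
  then have "D = 0" by (metis matrix_eq_ip matrix_vector_mult_0)
  then show ?thesis by (simp add: D_def)
qed




definition csub :: "(complex^'n) set \<Rightarrow> bool" where
  "csub S \<longleftrightarrow> subspace S \<and> (\<forall>c v. v \<in> S \<longrightarrow> c *s v \<in> S)"

lemma scaleR_vec_conv: "r *\<^sub>R (x::complex^'n) = of_real r *s x"
  unfolding vec_eq_iff by (simp only: vector_scaleR_component vector_smult_component) (simp add: scaleR_conv_of_real)

lemma cont_form: "continuous_on K (\<lambda>w::complex^'n. Re (ip w (A *v w)))"
  unfolding ip_def matrix_vector_mult_def
  by (intro continuous_intros)

lemma ip_herm: "adj A = A \<Longrightarrow> ip v (A *v w) = ip (A *v v) w"
  by (metis ip_adj_right)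

lemma form_scale: "Re (ip (of_real c *s u) (A *v (of_real c *s u))) = c^2 * Re (ip u (A *v u))"
  by (simp add: mv_scale ip_scale_left ip_scale_right power2_eq_square)

lemma eigen_exists:
  fixes A :: "complex^'n^'n"
  assumes herm: "adj A = A" and S: "csub S" and inv: "\<forall>v\<in>S. A *v v \<in> S"
    and ne: "u \<in> S" "u \<noteq> 0"
  shows "\<exists>v\<in>S. ip v v = 1 \<and> (\<exists>c. A *v v = c *s v)"
proof -
  have sub: "subspace S" using S csub_def by blast
  have cs: "\<And>c v. v \<in> S \<Longrightarrow> c *s v \<in> S" using S csub_def by blast
  let ?K = "sphere 0 1 \<inter> S"
  let ?f = "\<lambda>w::complex^'n. Re (ip w (A *v w))"
  have Kc: "compact ?K" by (rule compact_Int_closed) (simp_all add: closed_subspace sub)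
  have "(1 / norm u) *\<^sub>R u \<in> ?K" using ne sub by (simp add: subspace_scale)
  then have Kne: "?K \<noteq> {}" by blast
  obtain v where vK: "v \<in> ?K" and vmax: "\<And>w. w \<in> ?K \<Longrightarrow> ?f w \<le> ?f v"
    using continuous_attains_sup[OF Kc Kne cont_form] by blast
  have vS: "v \<in> S" and nv: "norm v = 1" using vK by auto
  have vv: "ip v v = 1" using nv by (simp add: ip_norm)
  define lam where "lam = ?f v"
  have bound: "?f w \<le> lam * Re (ip w w)" if "w \<in> S" for w
  proof (cases "w = 0")
    case True then show ?thesis by (simp add: matrix_vector_mult_0)
  next
    case False
    define n where "n = norm w"
    have n0: "n > 0" using False by (simp add: n_def)
    have "(1/n) *\<^sub>R w \<in> ?K" using n0 False that sub by (simp add: subspace_scale n_def)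
    then have "of_real (1/n) *s w \<in> ?K" by (simp only: scaleR_vec_conv)
    then have "?f (of_real (1/n) *s w) \<le> lam" using vmax lam_def by blast
    then have "(1/n)^2 * ?f w \<le> lam" by (simp only: form_scale)
    then have "?f w \<le> lam * n^2" using n0 by (simp add: field_simps)
    moreover have "Re (ip w w) = n^2" by (simp add: ip_norm n_def)
    ultimately show ?thesis by simp
  qed
  have re0: "Re (ip w (A *v v)) = 0" if wS: "w \<in> S" and ow: "ip v w = 0" for w
  proof (rule real_L[where C = "lam * Re (ip w w) - Re (ip w (A *v w))"])
    fix t :: real
    let ?u = "v + of_real t *s w"
    have uS: "?u \<in> S" using vS wS cs sub by (simp add: subspace_add)
    have wv: "ip w v = 0" using ow by (metis cnj_ip complex_cnj_zero)
    have avw: "ip v (A *v w) = cnj (ip w (A *v v))"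
      by (metis cnj_ip herm ip_herm)
    have e1: "ip ?u (A *v ?u) = ip v (A *v v) + of_real t * ip v (A *v w) + of_real t * ip w (A *v v)
        + of_real t * of_real t * ip w (A *v w)"
      by (simp add: mv_add mv_scale ip_add_left ip_add_right ip_scale_left ip_scale_right algebra_simps)
    have e2: "ip ?u ?u = 1 + of_real t * of_real t * ip w w"
      using vv ow wv
      by (simp add: ip_add_left ip_add_right ip_scale_left ip_scale_right algebra_simps)
    have "?f ?u \<le> lam * Re (ip ?u ?u)" by (rule bound[OF uS])
    then have "lam + 2 * t * Re (ip w (A *v v)) + t^2 * Re (ip w (A *v w)) \<le> lam * (1 + t^2 * Re (ip w w))"
      unfolding e1 e2 avw lam_def by (simp add: power2_eq_square)
    then show "2 * t * Re (ip w (A *v v)) \<le> t^2 * (lam * Re (ip w w) - Re (ip w (A *v w)))"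
      by (simp add: algebra_simps)
  qed
  have orth: "ip w (A *v v) = 0" if wS: "w \<in> S" and ow: "ip v w = 0" for w
  proof -
    have a: "Re (ip w (A *v v)) = 0" using re0 wS ow by blast
    have "Re (ip (\<i> *s w) (A *v v)) = 0"
      using re0[of "\<i> *s w"] cs[OF wS] ow by (simp add: ip_scale_right)
    then have b: "Im (ip w (A *v v)) = 0" by (simp add: ip_scale_left)
    show ?thesis using a b by (simp add: complex_eq_iff)
  qed
  define c where "c = ip v (A *v v)"
  define r where "r = A *v v - c *s v"
  have rS: "r \<in> S" unfolding r_def using inv vS cs sub by (simp add: subspace_diff)
  have vr: "ip v r = 0" by (simp add: r_def ip_diff_right ip_scale_right vv c_def)
  have rr: "ip r r = 0"
  proof -
    have "ip r r = ip r (A *v v) - c * ip r v" by (simp add: r_def ip_diff_right ip_scale_right)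
    also have "ip r v = 0" using vr by (metis cnj_ip complex_cnj_zero)
    finally show ?thesis using orth[OF rS vr] by simp
  qed
  then have "r = 0" using ip_self_zero by blast
  then have "A *v v = c *s v" by (simp add: r_def)
  then show ?thesis using vS vv by blast
qed

definition onb_eig :: "complex^'n^'n \<Rightarrow> (complex^'n) set \<Rightarrow> (complex^'n) set \<Rightarrow> bool" where
  "onb_eig A S B \<longleftrightarrow> finite B \<and> B \<subseteq> S \<and> (\<forall>b\<in>B. ip b b = 1)
     \<and> (\<forall>b\<in>B. \<forall>b'\<in>B. b \<noteq> b' \<longrightarrow> ip b b' = 0)
     \<and> (\<forall>b\<in>B. \<exists>c. A *v b = c *s b)
     \<and> (\<forall>v\<in>S. v = (\<Sum>b\<in>B. ip b v *s b))"

lemma spectral_sub: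
  fixes A :: "complex^'n^'n"
  assumes herm: "adj A = A"
  shows "csub S \<Longrightarrow> (\<forall>v\<in>S. A *v v \<in> S) \<Longrightarrow> \<exists>B. onb_eig A S B"
proof (induct "dim S" arbitrary: S rule: less_induct)
  case less
  have sub: "subspace S" using less.prems csub_def by blast
  have cs: "\<And>c v. v \<in> S \<Longrightarrow> c *s v \<in> S" using less.prems csub_def by blast
  show ?case
  proof (cases "\<exists>u\<in>S. u \<noteq> 0")
    case False
    then have "onb_eig A S {}" by (auto simp: onb_eig_def)
    then show ?thesis by blast
  next
    case True
    then obtain u where "u \<in> S" "u \<noteq> 0" by blast
    from eigen_exists[OF herm less.prems(1) less.prems(2) this]
    obtain v c where vS: "v \<in> S" and vv: "ip v v = 1" and ev: "A *v v = c *s v" by blast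
    define S' where "S' = {w\<in>S. ip v w = 0}"
    have sub': "subspace S'"
      unfolding subspace_def S'_def using sub cs
      by (auto simp: subspace_0 subspace_add ip_add_right subspace_scale scaleR_vec_conv ip_scale_right)
    have cs': "csub S'" using sub' cs by (auto simp: csub_def S'_def ip_scale_right)
    have inv': "\<forall>w\<in>S'. A *v w \<in> S'"
    proof
      fix w assume w: "w \<in> S'"
      have "ip v (A *v w) = ip (A *v v) w" using herm ip_herm by blast
      also have "\<dots> = 0" using w by (simp add: S'_def ev ip_scale_left)
      finally show "A *v w \<in> S'" using w less.prems(2) by (simp add: S'_def)
    qed
    have "v \<notin> S'" using vv by (simp add: S'_def)
    then have "S' \<subset> S" using vS by (auto simp: S'_def)
    then have "span S' \<subset> span S" using sub sub' by (metis span_eq_iff)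
    then have "dim S' < dim S" by (rule dim_psubset)
    from less.hyps[OF this cs' inv'] obtain B' where B': "onb_eig A S' B'" by blast
    have vB': "v \<notin> B'" using B' vv by (auto simp: onb_eig_def S'_def)
    have orth1: "\<forall>b\<in>B'. ip v b = 0" using B' by (auto simp: onb_eig_def S'_def)
    have orth2: "\<forall>b\<in>B'. ip b v = 0" using orth1 by (metis cnj_ip complex_cnj_zero)
    have "onb_eig A S (insert v B')"
      unfolding onb_eig_def
    proof (intro conjI)
      show "finite (insert v B')" using B' by (simp add: onb_eig_def)
      show "insert v B' \<subseteq> S" using B' vS by (auto simp: onb_eig_def S'_def)
      show "\<forall>b\<in>insert v B'. ip b b = 1" using B' vv by (simp add: onb_eig_def)
      show "\<forall>b\<in>insert v B'. \<forall>b'\<in>insert v B'. b \<noteq> b' \<longrightarrow> ip b b' = 0"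
        using B' orth1 orth2 by (auto simp: onb_eig_def)
      show "\<forall>b\<in>insert v B'. \<exists>c. A *v b = c *s b" using B' ev by (auto simp: onb_eig_def)
      show "\<forall>w\<in>S. w = (\<Sum>b\<in>insert v B'. ip b w *s b)"
      proof
        fix w assume wS: "w \<in> S"
        define w' where "w' = w - ip v w *s v"
        have w'S: "w' \<in> S'" using wS vS cs sub vv
          by (simp add: S'_def w'_def subspace_diff ip_diff_right ip_scale_right)
        then have "w' = (\<Sum>b\<in>B'. ip b w' *s b)" using B' by (simp add: onb_eig_def)
        also have "\<dots> = (\<Sum>b\<in>B'. ip b w *s b)"
          by (rule sum.cong) (simp_all add: w'_def ip_diff_right ip_scale_right orth2)
        finally have "w = ip v w *s v + (\<Sum>b\<in>B'. ip b w *s b)" by (simp add: w'_def algebra_simps)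
        then show "w = (\<Sum>b\<in>insert v B'. ip b w *s b)"
          using B' vB' by (simp add: onb_eig_def)
      qed
    qed
    then show ?thesis by blast
  qed
qed

lemma spectral:
  fixes A :: "complex^'n^'n"
  assumes herm: "adj A = A"
  shows "\<exists>B. onb_eig A UNIV B"
  by (rule spectral_sub[OF herm]) (auto simp: csub_def subspace_UNIV)




lemma mv_sum: "(A::complex^'n^'m) *v (\<Sum>b\<in>B. f b) = (\<Sum>b\<in>B. A *v f b)"
  by (induct B rule: infinite_finite_induct) (auto simp: mv_add matrix_vector_mult_0)

lemma onb_fin: "onb_eig A S B \<Longrightarrow> finite B" unfolding onb_eig_def by blast
lemma onb_norm: "onb_eig A S B \<Longrightarrow> b \<in> B \<Longrightarrow> ip b b = 1" unfolding onb_eig_def by blast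
lemma onb_orth: "onb_eig A S B \<Longrightarrow> b \<in> B \<Longrightarrow> b' \<in> B \<Longrightarrow> b \<noteq> b' \<Longrightarrow> ip b b' = 0"
  unfolding onb_eig_def by blast
lemma onb_expand: "onb_eig A S B \<Longrightarrow> v \<in> S \<Longrightarrow> v = (\<Sum>b\<in>B. ip b v *s b)"
  unfolding onb_eig_def by blast

lemma onb_eigv: "onb_eig A S B \<Longrightarrow> b \<in> B \<Longrightarrow> \<exists>c. A *v b = c *s b"
  unfolding onb_eig_def by (elim conjE) (drule bspec, assumption)

lemma onb_delta:
  assumes "onb_eig A S B" "b \<in> B"
  shows "(\<Sum>b'\<in>B. ip b' b *s g b') = g b"
proof -
  have fin: "finite B" and n: "ip b b = 1" and o: "\<And>b'. b' \<in> B \<Longrightarrow> b' \<noteq> b \<Longrightarrow> ip b' b = 0"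
    using assms onb_fin onb_norm onb_orth by blast+
  have "(\<Sum>b'\<in>B. ip b' b *s g b') = ip b b *s g b + (\<Sum>b'\<in>B - {b}. ip b' b *s g b')"
    using fin assms(2) by (simp add: sum.remove)
  also have "(\<Sum>b'\<in>B - {b}. ip b' b *s g b') = 0"
    by (rule sum.neutral) (simp add: o)
  finally show ?thesis using n by simp
qed

lemma onb_eigval:
  assumes "onb_eig A S B" "b \<in> B"
  shows "A *v b = ip b (A *v b) *s b"
proof -
  obtain c where c: "A *v b = c *s b" using onb_eigv[OF assms] by blast
  have "ip b b = 1" using assms onb_norm by blast
  then show ?thesis using c by (simp add: ip_scale_right)
qed

lemma onb_apply:
  assumes "onb_eig A UNIV B"
  shows "A *v v = (\<Sum>b\<in>B. ip b v *s (ip b (A *v b) *s b))"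
proof -
  have "v = (\<Sum>b\<in>B. ip b v *s b)" by (rule onb_expand[OF assms]) simp
  then have "A *v v = A *v (\<Sum>b\<in>B. ip b v *s b)" by (rule arg_cong)
  also have "\<dots> = (\<Sum>b\<in>B. ip b v *s (A *v b))" by (simp add: mv_sum mv_scale)
  also have "\<dots> = (\<Sum>b\<in>B. ip b v *s (ip b (A *v b) *s b))"
  proof (rule sum.cong)
    fix b assume "b \<in> B"
    from onb_eigval[OF assms this] show "ip b v *s (A *v b) = ip b v *s (ip b (A *v b) *s b)"
      by (rule arg_cong)
  qed simp
  finally show ?thesis .
qed

lemma psd_sqrt_exists:
  fixes A :: "complex^'n^'n"
  assumes A: "psd A"
  shows "\<exists>S. psd S \<and> S ** S = A"
proof -
  have herm: "adj A = A" using psd_herm A by blast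
  obtain B where B: "onb_eig A UNIV B" using spectral[OF herm] by blast
  define lam where "lam b = ip b (A *v b)" for b
  define s where "s b = complex_of_real (sqrt (Re (lam b)))" for b
  have lam_nn: "Re (lam b) \<ge> 0" "Im (lam b) = 0" for b
    using A by (auto simp: psd_ip cle0 lam_def)
  have ss: "s b * s b = lam b" for b
  proof -
    have "s b * s b = complex_of_real (sqrt (Re (lam b)) * sqrt (Re (lam b)))"
      unfolding s_def by (rule of_real_mult[symmetric])
    also have "\<dots> = complex_of_real (Re (lam b))" using lam_nn(1)[of b] by (simp only: real_sqrt_mult_self abs_of_nonneg)
    also have "\<dots> = lam b" using lam_nn(2)[of b] by (simp add: complex_eq_iff)
    finally show ?thesis .
  qed
  define S where "S = (\<Sum>b\<in>B. outer (s b *s b) b)"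
  have Sv: "S *v v = (\<Sum>b\<in>B. ip b v *s (s b *s b))" for v
    by (simp add: S_def sum_mult_vec outer_mult)
  have Sb: "S *v b = s b *s b" if "b \<in> B" for b
    using Sv[of b] onb_delta[OF B that, of "\<lambda>b. s b *s b"] by simp
  have "psd S"
    unfolding psd_ip
  proof
    fix v
    have "ip v (S *v v) = (\<Sum>b\<in>B. ip b v * (s b * ip v b))"
      by (simp add: Sv ip_sum_right ip_scale_right mult.assoc)
    also have "\<dots> = (\<Sum>b\<in>B. complex_of_real (sqrt (Re (lam b)) * (cmod (ip v b))^2))"
    proof (rule sum.cong)
      fix b
      have "ip b v * (s b * ip v b) = s b * (cnj (ip v b) * ip v b)"
        by (simp add: cnj_ip)
      then show "ip b v * (s b * ip v b) = complex_of_real (sqrt (Re (lam b)) * (cmod (ip v b))^2)"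
        by (simp add: cnj_mult_self s_def)
    qed simp
    also have "0 \<le> \<dots>" by (rule sum_nonneg) (use lam_nn in \<open>simp add: cle0\<close>)
    finally show "0 \<le> ip v (S *v v)" .
  qed
  moreover have "S ** S = A"
  proof (rule matrix_eq_ip)
    fix v
    have "(S ** S) *v v = S *v (S *v v)" by (simp add: matrix_vector_mul_assoc)
    also have "\<dots> = (\<Sum>b\<in>B. ip b v *s (s b *s (S *v b)))"
      by (simp only: Sv[of v] mv_sum mv_scale)
    also have "\<dots> = (\<Sum>b\<in>B. ip b v *s (lam b *s b))"
      by (rule sum.cong) (simp_all add: Sb ss[symmetric])
    also have "\<dots> = A *v v" unfolding lam_def by (rule onb_apply[OF B, symmetric])
    finally show "(S ** S) *v v = A *v v" .
  qed
  ultimately show ?thesis by blast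
qed

lemma psd_sqrt_prop:
  assumes "psd A"
  shows "psd (psd_sqrt A)" "psd_sqrt A ** psd_sqrt A = A"
proof -
  obtain S where S: "psd S" "S ** S = A" using psd_sqrt_exists[OF assms] by blast
  have ex1: "\<exists>!S. psd S \<and> S ** S = A"
  proof (rule ex1I[of _ S])
    show "psd S \<and> S ** S = A" using S by simp
    fix x assume "psd x \<and> x ** x = A"
    then show "x = S" using psd_sqrt_unique[of x S] S by simp
  qed
  have "psd (psd_sqrt A) \<and> psd_sqrt A ** psd_sqrt A = A"
    unfolding psd_sqrt_def by (rule theI'[OF ex1])
  then show "psd (psd_sqrt A)" "psd_sqrt A ** psd_sqrt A = A" by auto
qed




lemma gram_ip:
  assumes "adj X ** X = G"
  shows "ip (X *v x) (X *v y) = ip x (G *v y)"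
proof -
  have "ip (X *v x) (X *v y) = ip x (adj X *v (X *v y))" by (rule ip_adj_right[symmetric])
  also have "\<dots> = ip x (G *v y)" using assms by (simp add: matrix_vector_mul_assoc)
  finally show ?thesis .
qed

lemma gram_lemma:
  fixes M :: "complex^'n^'a" and N :: "complex^'n^'b"
  assumes MN: "adj M ** M = adj N ** N"
  shows "\<exists>U :: complex^'a^'b. U ** M = N \<and> adj U ** N = M
           \<and> (\<forall>z. \<exists>y. adj U *v z = M *v y)"
proof -
  define G where "G = adj M ** M"
  have GM: "adj M ** M = G" and GN: "adj N ** N = G" using MN by (simp_all add: G_def)
  have herm: "adj G = G" by (simp add: G_def adj_mult)
  obtain B where B: "onb_eig G UNIV B" using spectral[OF herm] by blast
  define lam where "lam b = ip b (G *v b)" for b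
  have ev: "G *v b = lam b *s b" if "b \<in> B" for b
    unfolding lam_def by (rule onb_eigval[OF B that])
  have lam_real: "cnj (lam b) = lam b" for b
    unfolding lam_def by (metis cnj_ip herm ip_herm)
  define B' where "B' = {b\<in>B. lam b \<noteq> 0}"
  have fin: "finite B" using onb_fin[OF B] .
  have key: "(\<Sum>b\<in>B'. ip (X *v b) (X *v w) *s ((1 / lam b) *s (Y *v b))) = Y *v w"
    if X: "adj X ** X = G" and Y: "adj Y ** Y = G" for X :: "complex^'n^'c" and Y :: "complex^'n^'d" and w
  proof -
    have "(\<Sum>b\<in>B'. ip (X *v b) (X *v w) *s ((1 / lam b) *s (Y *v b))) = (\<Sum>b\<in>B'. ip b w *s (Y *v b))"
    proof (rule sum.cong)
      fix b assume b: "b \<in> B'"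
      then have bB: "b \<in> B" and l0: "lam b \<noteq> 0" by (auto simp: B'_def)
      have "ip (X *v b) (X *v w) = ip (G *v b) w"
        using gram_ip[OF X] herm ip_herm by metis
      also have "\<dots> = lam b * ip b w" using ev[OF bB] lam_real by (simp add: ip_scale_left)
      finally show "ip (X *v b) (X *v w) *s ((1 / lam b) *s (Y *v b)) = ip b w *s (Y *v b)"
        using l0 by (simp add: vector_smult_assoc)
    qed simp
    also have "\<dots> = (\<Sum>b\<in>B. ip b w *s (Y *v b))"
    proof (rule sum.mono_neutral_left[OF fin])
      show "B' \<subseteq> B" by (auto simp: B'_def)
      show "\<forall>i\<in>B - B'. ip i w *s (Y *v i) = 0"
      proof
        fix b assume "b \<in> B - B'"
        then have "lam b = 0" by (auto simp: B'_def)
        then have "ip (Y *v b) (Y *v b) = 0" using gram_ip[OF Y] lam_def by simp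
        then have "Y *v b = 0" using ip_self_zero by blast
        then show "ip b w *s (Y *v b) = 0" by simp
      qed
    qed
    also have "\<dots> = Y *v (\<Sum>b\<in>B. ip b w *s b)" by (simp add: mv_sum mv_scale)
    also have "(\<Sum>b\<in>B. ip b w *s b) = w" by (rule onb_expand[OF B, symmetric]) simp
    finally show ?thesis .
  qed
  define U :: "complex^'a^'b" where "U = (\<Sum>b\<in>B'. outer ((1 / lam b) *s (N *v b)) (M *v b))"
  have Uv: "U *v z = (\<Sum>b\<in>B'. ip (M *v b) z *s ((1 / lam b) *s (N *v b)))" for z
    by (simp add: U_def sum_mult_vec outer_mult)
  have aUv: "adj U *v z = (\<Sum>b\<in>B'. ip (N *v b) z *s ((1 / lam b) *s (M *v b)))" for z
  proof -
    have "adj U *v z = (\<Sum>b\<in>B'. ip ((1 / lam b) *s (N *v b)) z *s (M *v b))"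
      by (simp add: U_def adj_sum adj_outer sum_mult_vec outer_mult)
    also have "\<dots> = (\<Sum>b\<in>B'. ip (N *v b) z *s ((1 / lam b) *s (M *v b)))"
    proof (rule sum.cong)
      fix b
      have "cnj (1 / lam b) = 1 / lam b" using lam_real[of b] by simp
      then show "ip ((1 / lam b) *s (N *v b)) z *s (M *v b) = ip (N *v b) z *s ((1 / lam b) *s (M *v b))"
        by (simp add: ip_scale_left vector_smult_assoc mult.commute)
    qed simp
    finally show ?thesis .
  qed
  have UM: "U ** M = N"
  proof (rule matrix_eq_ip)
    fix v
    have "(U ** M) *v v = U *v (M *v v)" by (simp add: matrix_vector_mul_assoc)
    also have "\<dots> = N *v v" unfolding Uv by (rule key[OF GM GN])
    finally show "(U ** M) *v v = N *v v" .
  qed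
  have UN: "adj U ** N = M"
  proof (rule matrix_eq_ip)
    fix v
    have "(adj U ** N) *v v = adj U *v (N *v v)" by (simp add: matrix_vector_mul_assoc)
    also have "\<dots> = M *v v" unfolding aUv by (rule key[OF GN GM])
    finally show "(adj U ** N) *v v = M *v v" .
  qed
  have rng: "\<forall>z. \<exists>y. adj U *v z = M *v y"
  proof
    fix z
    show "\<exists>y. adj U *v z = M *v y"
      by (rule exI[of _ "\<Sum>b\<in>B'. (ip (N *v b) z * (1 / lam b)) *s b"])
         (simp add: aUv mv_sum mv_scale vector_smult_assoc)
  qed
  show ?thesis using UM UN rng by blast
qed




lemma sum_pair: "(\<Sum>p\<in>(UNIV::('a::finite\<times>'b::finite) set). f p) = (\<Sum>a\<in>UNIV. \<Sum>b\<in>UNIV. f (a,b))"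
proof -
  have "(\<Sum>p\<in>(UNIV::('a\<times>'b) set). f p) = (\<Sum>p\<in>UNIV \<times> UNIV. f p)" by simp
  also have "\<dots> = (\<Sum>a\<in>UNIV. \<Sum>b\<in>UNIV. f (a,b))" by (rule sum.cartesian_product')
  finally show ?thesis .
qed

lemma sum_pair': "(\<Sum>p\<in>(UNIV::('a::finite\<times>'b::finite) set). f p) = (\<Sum>b\<in>UNIV. \<Sum>a\<in>UNIV. f (a,b))"
  by (simp add: sum_pair sum.swap[of _ "UNIV::'a set"])

lemma kron_adj: "adj (kron A B) = kron (adj A) (adj B)"
  by (simp add: adj_def kron_def vec_eq_iff)

lemma kron_mult: "kron (A::complex^'b::finite^'a::finite) (B::complex^'d::finite^'c::finite) ** kron (C::complex^'e::finite^'b) (D::complex^'f::finite^'d) = kron (A ** C) (B ** D)"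
  by (simp add: kron_def vec_eq_iff matrix_matrix_mult_def sum_pair sum_product mult_ac)

lemma ifd1: "x * (if P then 1 else 0) = (if P then x else (0::complex))" by simp
lemma ifd2: "(if P then 1 else 0) * x = (if P then x else (0::complex))" by simp
lemma ifd3: "(if P then x else 0) * y = (if P then x * y else (0::complex))" by simp
lemma ifd4: "y * (if P then x else 0) = (if P then y * x else (0::complex))" by simp
lemmas ifd = ifd1 ifd2 ifd3 ifd4

lemma L1: "(kron Z (mat 1 :: complex^'k^'k) ** X) $ (a,k) $ q = (\<Sum>a'\<in>UNIV. Z$a$a' * X$(a',k)$q)"
  by (simp add: matrix_matrix_mult_def kron_def sum_pair mat_def ifd)
lemma L2: "(X ** kron Z (mat 1 :: complex^'k^'k)) $ p $ (a,k) = (\<Sum>a'\<in>UNIV. X$p$(a',k) * Z$a'$a)"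
  by (simp add: matrix_matrix_mult_def kron_def sum_pair mat_def ifd)
lemma L3: "(R ** kron (mat 1 :: complex^'k^'k) \<rho>) $ a $ (k,h') = (\<Sum>h\<in>UNIV. R$a$(k,h) * \<rho>$h$h')"
  by (simp add: matrix_matrix_mult_def kron_def sum_pair' mat_def ifd)

lemma mm_entry: "(A ** B) $ i $ j = (\<Sum>k\<in>UNIV. A$i$k * B$k$j)"
  by (simp add: matrix_matrix_mult_def)

lemma ptrace1_comm: "ptrace1 (kron Z (mat 1 :: complex^'k^'k) ** X) = ptrace1 (X ** kron Z (mat 1))"
proof -
  have "(\<Sum>a\<in>UNIV. \<Sum>a'\<in>UNIV. Z$a$a' * X$(a',k)$(a,l)) = (\<Sum>a\<in>UNIV. \<Sum>a'\<in>UNIV. X$(a,k)$(a',l) * Z$a'$a)"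
    for k l :: 'k
    by (subst sum.swap) (rule sum.cong, rule refl, rule sum.cong, rule refl, rule mult.commute)
  then show ?thesis by (simp add: ptrace1_def vec_eq_iff L1 L2)
qed

definition rs :: "complex^'h::finite^('a::finite \<times> 'k::finite) \<Rightarrow> complex^('k \<times> 'h)^'a" where
  "rs V = (\<chi> a p. V $ (a, fst p) $ snd p)"

lemma comp_rs:
  fixes V :: "complex^'h::finite^('a::finite \<times> 'k::finite)"
  shows "ptrace2 (V ** \<rho> ** adj V) = rs V ** kron (mat 1 :: complex^'k^'k) \<rho> ** adj (rs V)"
proof -
  have "ptrace2 (V ** \<rho> ** adj V) $ a $ b = (rs V ** kron (mat 1 :: complex^'k^'k) \<rho> ** adj (rs V)) $ a $ b" for a b
  proof -
    have "ptrace2 (V ** \<rho> ** adj V) $ a $ b = (\<Sum>k\<in>UNIV. \<Sum>h'\<in>UNIV. (\<Sum>h\<in>UNIV. V$(a,k)$h * \<rho>$h$h') * cnj (V$(b,k)$h'))"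
      by (simp add: ptrace2_def mm_entry adj_def)
    also have "\<dots> = (\<Sum>k\<in>UNIV. \<Sum>h'\<in>UNIV. (rs V ** kron (mat 1 :: complex^'k^'k) \<rho>) $ a $ (k,h') * adj (rs V) $ (k,h') $ b)"
      by (simp only: L3) (simp add: adj_def rs_def)
    also have "\<dots> = (rs V ** kron (mat 1 :: complex^'k^'k) \<rho> ** adj (rs V)) $ a $ b"
      by (simp only: mm_entry[of "rs V ** kron (mat 1) \<rho>"] sum_pair)
    finally show ?thesis .
  qed
  then show ?thesis by (simp add: vec_eq_iff)
qed

lemma mm_outer: "A ** outer x y = outer (A *v x) y"
  by (simp add: vec_eq_iff outer_def matrix_matrix_mult_def matrix_vector_mult_def sum_distrib_right sum_distrib_left mult_ac)

lemma outer_mm_adj: "outer x y ** adj B = outer x (B *v y)"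
  by (simp add: vec_eq_iff outer_def matrix_matrix_mult_def matrix_vector_mult_def adj_def sum_distrib_left mult_ac)

definition Cm :: "complex^'h::finite^('a::finite \<times> 'k::finite) \<Rightarrow> 'k \<Rightarrow> 'k \<Rightarrow> complex^'h^'h" where
  "Cm V k l = (\<chi> h' h. \<Sum>a\<in>UNIV. cnj (V$(a,l)$h') * V$(a,k)$h)"

lemma pt1_outer:
  fixes V :: "complex^'h::finite^('a::finite \<times> 'k::finite)"
  shows "ptrace1 (V ** outer u u ** adj V) $ k $ l = ip u (Cm V k l *v u)"
proof -
  have "ptrace1 (V ** outer u u ** adj V) $ k $ l = (\<Sum>a\<in>UNIV. (V *v u)$(a,k) * cnj ((V *v u)$(a,l)))"
  proof -
    have "V ** outer u u ** adj V = outer (V *v u) (V *v u)" by (simp add: mm_outer outer_mm_adj)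
    then show ?thesis by (simp add: ptrace1_def outer_def)
  qed
  also have "\<dots> = (\<Sum>a\<in>UNIV. \<Sum>h'\<in>UNIV. \<Sum>h\<in>UNIV. V$(a,k)$h * u$h * (cnj (V$(a,l)$h') * cnj (u$h')))"
    by (simp add: matrix_vector_mult_def sum_distrib_left sum_distrib_right cnj_sum)
  also have "\<dots> = (\<Sum>h'\<in>UNIV. \<Sum>h\<in>UNIV. \<Sum>a\<in>UNIV. V$(a,k)$h * u$h * (cnj (V$(a,l)$h') * cnj (u$h')))"
    by (subst sum.swap, rule sum.cong, rule refl, subst sum.swap, rule refl) 
  also have "\<dots> = ip u (Cm V k l *v u)"
    by (simp add: ip_def Cm_def matrix_vector_mult_def sum_distrib_left sum_distrib_right mult_ac)
  finally show ?thesis .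
qed

lemma gram_Cm: "(adj (rs V) ** rs V) $ (l,h') $ (k,h) = Cm V k l $ h' $ h"
  by (simp add: adj_def rs_def Cm_def matrix_matrix_mult_def)




lemma form_zero:
  fixes C :: "complex^'n^'n"
  assumes h: "\<And>u. ip u u = 1 \<Longrightarrow> ip u (C *v u) = 0"
  shows "C = 0"
proof -
  have all: "ip u (C *v u) = 0" for u
  proof (cases "u = 0")
    case True then show ?thesis by (simp add: matrix_vector_mult_0)
  next
    case False
    define n where "n = norm u"
    have n0: "n > 0" using False by (simp add: n_def)
    define u' where "u' = of_real (1/n) *s u"
    have "ip u' u' = of_real (1/n) * of_real (1/n) * ip u u" by (simp add: u'_def ip_scale_left ip_scale_right)
    also have "\<dots> = 1" using n0 by (simp add: ip_norm n_def power2_eq_square flip: of_real_mult)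
    finally have "ip u' (C *v u') = 0" using h by blast
    moreover have "ip u' (C *v u') = of_real (1/n) * of_real (1/n) * ip u (C *v u)"
      by (simp add: u'_def ip_scale_left ip_scale_right mv_scale)
    ultimately show ?thesis using n0 by simp
  qed
  then have "psd C" by (simp add: psd_ip)
  then have "C *v u = 0 *v u" for u using psd_zero_form[of C u] all[of u] by (simp add: matrix_vector_mult_0)
  then show ?thesis by (rule matrix_eq_ip)
qed

lemma density_outer: "ip u u = 1 \<Longrightarrow> density (outer u u)"
proof -
  assume u: "ip u u = 1"
  have "psd (outer u u)"
    unfolding psd_ip
  proof
    fix v
    have "ip v (outer u u *v v) = cnj (ip v u) * ip v u"
      by (simp add: outer_mult ip_scale_right cnj_ip mult.commute)
    also have "\<dots> = of_real ((cmod (ip v u))^2)" by (rule cnj_mult_self)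
    finally show "0 \<le> ip v (outer u u *v v)" by (simp add: cle0)
  qed
  moreover have "trace (outer u u) = ip u u"
    by (simp add: trace_def outer_def ip_def mult.commute)
  ultimately show ?thesis using u by (simp add: density_def)
qed

lemma povm_psd: "povm E \<Longrightarrow> psd (E x)"
  by (simp add: povm_def)

lemma sqrt_herm: "psd E \<Longrightarrow> adj (psd_sqrt E) = psd_sqrt E"
  using psd_sqrt_prop(1) psd_herm by blast

lemma kron_herm: "psd E \<Longrightarrow> adj (kron (psd_sqrt E) (mat 1 :: complex^'k::finite^'k)) = kron (psd_sqrt E) (mat 1)"
  by (simp add: kron_adj sqrt_herm)

lemma kron_sq: "psd E \<Longrightarrow> kron (psd_sqrt E) (mat 1 :: complex^'k::finite^'k) ** kron (psd_sqrt E) (mat 1) = kron E (mat 1)"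
  by (simp add: kron_mult psd_sqrt_prop(2))

lemma dil_pt1:
  fixes W :: "complex^'h::finite^('a::finite \<times> 'k::finite)" and E :: "complex^'a^'a"
  assumes E: "psd E"
  defines "V \<equiv> kron (psd_sqrt E) (mat 1 :: complex^'k^'k) ** W"
  shows "ptrace1 (W ** \<rho> ** adj W ** kron E (mat 1)) = ptrace1 (V ** \<rho> ** adj V)"
proof -
  let ?K = "kron (psd_sqrt E) (mat 1 :: complex^'k^'k)"
  have "ptrace1 (W ** \<rho> ** adj W ** kron E (mat 1)) = ptrace1 ((W ** \<rho> ** adj W ** ?K) ** ?K)"
    by (simp add: kron_sq[OF E, symmetric] matrix_mul_assoc)
  also have "\<dots> = ptrace1 (?K ** (W ** \<rho> ** adj W ** ?K))" by (rule ptrace1_comm[symmetric])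
  also have "\<dots> = ptrace1 (V ** \<rho> ** adj V)"
    by (simp add: V_def adj_mult kron_herm[OF E] matrix_mul_assoc)
  finally show ?thesis .
qed

lemma dil_comp:
  fixes W :: "complex^'h::finite^('a::finite \<times> 'k::finite)" and E :: "'x \<Rightarrow> complex^'a^'a"
  assumes E: "psd (E x)"
  defines "V \<equiv> kron (psd_sqrt (E x)) (mat 1 :: complex^'k^'k) ** W"
  shows "complementary W E x \<rho> = rs V ** kron (mat 1 :: complex^'k^'k) \<rho> ** adj (rs V)"
proof -
  have "complementary W E x \<rho> = ptrace2 (V ** \<rho> ** adj V)"
    by (simp add: complementary_def V_def adj_mult kron_herm[OF E] matrix_mul_assoc)
  also have "\<dots> = rs V ** kron (mat 1 :: complex^'k^'k) \<rho> ** adj (rs V)" by (rule comp_rs)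
  finally show ?thesis .
qed

lemma gram_eq:
  fixes I :: "'x::finite \<Rightarrow> complex^'h^'h \<Rightarrow> complex^'k^'k"
    and W1 :: "complex^'h::finite^('a::finite \<times> 'k::finite)" and E1 :: "'x \<Rightarrow> complex^'a^'a"
    and W2 :: "complex^'h^('b::finite \<times> 'k)" and E2 :: "'x \<Rightarrow> complex^'b^'b" and x :: 'x
  assumes d1: "dilation I W1 E1" and d2: "dilation I W2 E2"
  defines "V1 \<equiv> kron (psd_sqrt (E1 x)) (mat 1 :: complex^'k^'k) ** W1"
    and "V2 \<equiv> kron (psd_sqrt (E2 x)) (mat 1 :: complex^'k^'k) ** W2"
  shows "adj (rs V1) ** rs V1 = adj (rs V2) ** rs V2"
proof -
  have E1: "psd (E1 x)" using d1 by (simp add: dilation_def povm_def)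
  have E2: "psd (E2 x)" using d2 by (simp add: dilation_def povm_def)
  have Cm_eq: "Cm V1 k l = Cm V2 k l" for k l
  proof -
    have "Cm V1 k l - Cm V2 k l = 0"
    proof (rule form_zero)
      fix u :: "complex^'h" assume u: "ip u u = 1"
      have dens: "density (outer u u)" using density_outer[OF u] .
      have "I x (outer u u) = ptrace1 (V1 ** outer u u ** adj V1)"
        using d1 dens dil_pt1[OF E1, of W1] by (simp add: dilation_def V1_def)
      moreover have "I x (outer u u) = ptrace1 (V2 ** outer u u ** adj V2)"
        using d2 dens dil_pt1[OF E2, of W2] by (simp add: dilation_def V2_def)
      ultimately have "ptrace1 (V1 ** outer u u ** adj V1) $ k $ l = ptrace1 (V2 ** outer u u ** adj V2) $ k $ l"
        by simp
      then have "ip u (Cm V1 k l *v u) = ip u (Cm V2 k l *v u)" by (simp only: pt1_outer)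
      then show "ip u ((Cm V1 k l - Cm V2 k l) *v u) = 0"
        by (simp add: matrix_vector_mult_diff_rdistrib ip_diff_right)
    qed
    then show ?thesis by simp
  qed
  show ?thesis
  proof (subst vec_eq_iff, intro allI, subst vec_eq_iff, intro allI)
    fix p q :: "'k \<times> 'h"
    obtain l h' where p: "p = (l,h')" by fastforce
    obtain k h where q: "q = (k,h)" by fastforce
    show "(adj (rs V1) ** rs V1) $ p $ q = (adj (rs V2) ** rs V2) $ p $ q"
      unfolding p q gram_Cm Cm_eq ..
  qed
qed




lemma cscale_add_left: "cscale (a + b) X = cscale a X + cscale b X"
  by (simp add: cscale_def vec_eq_iff algebra_simps)
lemma cscale_add_right: "cscale c (X + Y) = cscale c X + cscale c Y"
  by (simp add: cscale_def vec_eq_iff algebra_simps)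
lemma cscale_mult: "cscale (a * b) X = cscale a (cscale b X)"
  by (simp add: cscale_def vec_eq_iff algebra_simps)
lemma cscale_zero[simp]: "cscale 0 X = 0"
  by (simp add: cscale_def vec_eq_iff)
lemma cscale_zero2[simp]: "cscale c 0 = 0"
  by (simp add: cscale_def vec_eq_iff)
lemma mm_cscale_left: "(cscale c A) ** (B::complex^'n^'m) = cscale c (A ** B)"
  by (simp add: cscale_def vec_eq_iff matrix_matrix_mult_def sum_distrib_left mult_ac)
lemma mm_cscale_right: "(A::complex^'m^'p) ** cscale c B = cscale c (A ** B)"
  by (simp add: cscale_def vec_eq_iff matrix_matrix_mult_def sum_distrib_left mult_ac)
lemma trace_cscale: "trace (cscale c A) = c * trace A"
  by (simp add: cscale_def trace_def sum_distrib_left)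
lemma cscale_mv: "cscale c A *v v = c *s (A *v v)"
  by (simp add: cscale_def vec_eq_iff matrix_vector_mult_def sum_distrib_left mult_ac)

definition tau :: "'a::finite \<Rightarrow> complex^'a^'a" where
  "tau e = (\<chi> i j. if i = e \<and> j = e then 1 else 0)"

lemma trace_tau: "trace (tau e) = 1"
  by (simp add: trace_def tau_def)

lemma ip_tau: "ip u (tau e *v w) = cnj (u $ e) * w $ e"
proof -
  have "tau e *v w = (\<chi> r. if r = e then w $ e else 0)"
    by (simp add: vec_eq_iff tau_def matrix_vector_mult_def ifd)
  then show ?thesis by (simp add: ip_def ifd)
qed

definition chan :: "complex^'b::finite^'a::finite \<Rightarrow> 'a \<Rightarrow> complex^'b^'b \<Rightarrow> complex^'a^'a" where
  "chan U e \<sigma> = U ** \<sigma> ** adj U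
     + cscale (trace ((mat 1 - adj U ** U) ** \<sigma> ** adj (mat 1 - adj U ** U))) (tau e)"

lemma block_psd_ip: "block_psd k Y \<longleftrightarrow> (\<forall>v. 0 \<le> (\<Sum>i<k. \<Sum>j<k. ip (v i) (Y i j *v v j)))"
  by (simp add: block_psd_def ip_def)

lemma chan_linear: "clinear_map (chan U e)"
  unfolding clinear_map_def
proof (intro conjI allI)
  fix A B
  show "chan U e (A + B) = chan U e A + chan U e B"
    by (simp add: chan_def matrix_add_ldistrib mm_add_rdistrib trace_add cscale_add_left algebra_simps)
next
  fix c A
  show "chan U e (cscale c A) = cscale c (chan U e A)"
    by (simp add: chan_def mm_cscale_left mm_cscale_right trace_cscale cscale_mult cscale_add_right)
qed

lemma zero_linear: "clinear_map (\<lambda>\<sigma>::complex^'n^'n. 0 :: complex^'m^'m)"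
  by (simp add: clinear_map_def)

lemma zero_cp: "completely_positive (\<lambda>\<sigma>::complex^'n^'n. 0 :: complex^'m^'m)"
  by (simp add: completely_positive_def block_psd_def matrix_vector_mult_0)

lemma trace_sandwich: "trace (Q ** (X::complex^'n^'n) ** adj Q) = (\<Sum>s\<in>UNIV. ip (adj Q *v axis s 1) (X *v (adj Q *v axis s 1)))"
  unfolding trace_ip
proof (rule sum.cong)
  fix s
  have "ip (axis s 1) ((Q ** X ** adj Q) *v axis s 1) = ip (axis s 1) (Q *v (X *v (adj Q *v axis s 1)))"
    by (simp add: matrix_vector_mul_assoc matrix_mul_assoc)
  also have "\<dots> = ip (adj Q *v axis s 1) (X *v (adj Q *v axis s 1))"
    by (rule ip_adj_left[symmetric])
  finally show "ip (axis s 1) ((Q ** X ** adj Q) *v axis s 1) = ip (adj Q *v axis s 1) (X *v (adj Q *v axis s 1))" .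
qed simp

lemma chan_cp:
  fixes U :: "complex^'b::finite^'a::finite"
  shows "completely_positive (chan U e)"
  unfolding completely_positive_def
proof (intro allI impI)
  fix k and X :: "nat \<Rightarrow> nat \<Rightarrow> complex^'b^'b" assume X: "block_psd k X"
  let ?Q = "mat 1 - adj U ** U"
  have Xp: "\<And>v. 0 \<le> (\<Sum>i<k. \<Sum>j<k. ip (v i) (X i j *v v j))" using X block_psd_ip by blast
  show "block_psd k (\<lambda>i j. chan U e (X i j))"
    unfolding block_psd_ip
  proof
    fix v
    let ?f = "\<lambda>s. adj ?Q *v axis s 1"
    have A: "(\<Sum>i<k. \<Sum>j<k. ip (v i) ((U ** X i j ** adj U) *v v j))
        = (\<Sum>i<k. \<Sum>j<k. ip (adj U *v v i) (X i j *v (adj U *v v j)))"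
      by (simp add: matrix_vector_mul_assoc[symmetric] ip_adj_left)
    have B: "(\<Sum>i<k. \<Sum>j<k. ip (v i) (cscale (trace (?Q ** X i j ** adj ?Q)) (tau e) *v v j))
        = (\<Sum>s\<in>UNIV. \<Sum>i<k. \<Sum>j<k. ip ((v i $ e) *s ?f s) (X i j *v ((v j $ e) *s ?f s)))"
    proof -
      have "(\<Sum>i<k. \<Sum>j<k. ip (v i) (cscale (trace (?Q ** X i j ** adj ?Q)) (tau e) *v v j))
          = (\<Sum>i<k. \<Sum>j<k. \<Sum>s\<in>UNIV. ip ((v i $ e) *s ?f s) (X i j *v ((v j $ e) *s ?f s)))"
        by (simp add: cscale_mv ip_scale_right ip_tau trace_sandwich ip_scale_left mv_scale
                      sum_distrib_left sum_distrib_right mult_ac)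
      also have "\<dots> = (\<Sum>i<k. \<Sum>s\<in>UNIV. \<Sum>j<k. ip ((v i $ e) *s ?f s) (X i j *v ((v j $ e) *s ?f s)))"
        by (rule sum.cong[OF refl], rule sum.swap)
      also have "\<dots> = (\<Sum>s\<in>UNIV. \<Sum>i<k. \<Sum>j<k. ip ((v i $ e) *s ?f s) (X i j *v ((v j $ e) *s ?f s)))"
        by (rule sum.swap)
      finally show ?thesis .
    qed
    have "(\<Sum>i<k. \<Sum>j<k. ip (v i) (chan U e (X i j) *v v j))
        = (\<Sum>i<k. \<Sum>j<k. ip (v i) ((U ** X i j ** adj U) *v v j))
          + (\<Sum>i<k. \<Sum>j<k. ip (v i) (cscale (trace (?Q ** X i j ** adj ?Q)) (tau e) *v v j))"
      by (simp add: chan_def matrix_vector_mult_add_rdistrib ip_add_right sum.distrib)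
    also have "\<dots> = (\<Sum>i<k. \<Sum>j<k. ip (adj U *v v i) (X i j *v (adj U *v v j)))
          + (\<Sum>s\<in>UNIV. \<Sum>i<k. \<Sum>j<k. ip ((v i $ e) *s ?f s) (X i j *v ((v j $ e) *s ?f s)))"
      by (simp only: A B)
    also have "0 \<le> \<dots>"
      by (rule add_nonneg_nonneg, rule Xp, rule sum_nonneg, rule Xp)
    finally show "0 \<le> (\<Sum>i<k. \<Sum>j<k. ip (v i) (chan U e (X i j) *v v j))" .
  qed
qed

lemma chan_trace:
  assumes P: "adj U ** U ** (adj U ** U) = adj U ** U"
  shows "trace (chan U e \<sigma>) = trace \<sigma>"
proof -
  let ?P = "adj U ** U"
  let ?Q = "mat 1 - adj U ** U"
  have hQ: "adj ?Q = ?Q" by (simp add: adj_diff adj_mult)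
  have QQ: "?Q ** ?Q = ?Q"
    by (simp add: mm_diff_ldistrib mm_diff_rdistrib P)
  have "trace (chan U e \<sigma>) = trace (U ** \<sigma> ** adj U) + trace (?Q ** \<sigma> ** adj ?Q)"
    by (simp add: chan_def trace_add trace_cscale trace_tau)
  also have "trace (U ** \<sigma> ** adj U) = trace (?P ** \<sigma>)"
    by (metis trace_mul_sym matrix_mul_assoc)
  also have "trace (?Q ** \<sigma> ** adj ?Q) = trace (?Q ** \<sigma>)"
    by (metis hQ QQ trace_mul_sym matrix_mul_assoc)
  also have "trace (?P ** \<sigma>) + trace (?Q ** \<sigma>) = trace \<sigma>"
    by (simp add: mm_diff_rdistrib trace_sub)
  finally show ?thesis .
qed

lemma psd_trace_nonneg: "psd \<rho> \<Longrightarrow> 0 \<le> trace \<rho>"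
  unfolding trace_ip psd_ip by (rule sum_nonneg) blast




lemma main_dir:
  fixes I :: "'x::finite \<Rightarrow> complex^'h^'h \<Rightarrow> complex^'k^'k"
    and W1 :: "complex^'h::finite^('a::finite \<times> 'k::finite)" and E1 :: "'x \<Rightarrow> complex^'a^'a"
    and W2 :: "complex^'h^('b::finite \<times> 'k)" and E2 :: "'x \<Rightarrow> complex^'b^'b"
  assumes d1: "dilation I W1 E1" and d2: "dilation I W2 E2"
  shows "postproc (complementary W1 E1) (complementary W2 E2)"
proof -
  define M1 where "M1 x = rs (kron (psd_sqrt (E1 x)) (mat 1 :: complex^'k^'k) ** W1)" for x
  define M2 where "M2 x = rs (kron (psd_sqrt (E2 x)) (mat 1 :: complex^'k^'k) ** W2)" for x
  have E1: "psd (E1 x)" for x using d1 by (simp add: dilation_def povm_def)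
  have E2: "psd (E2 x)" for x using d2 by (simp add: dilation_def povm_def)
  have C1: "complementary W1 E1 x \<rho> = M1 x ** kron (mat 1 :: complex^'k^'k) \<rho> ** adj (M1 x)" for x \<rho>
    unfolding M1_def by (rule dil_comp[of E1 x, OF E1])
  have C2: "complementary W2 E2 x \<rho> = M2 x ** kron (mat 1 :: complex^'k^'k) \<rho> ** adj (M2 x)" for x \<rho>
    unfolding M2_def by (rule dil_comp[of E2 x, OF E2])
  have G: "adj (M2 x) ** M2 x = adj (M1 x) ** M1 x" for x
    unfolding M1_def M2_def using gram_eq[OF d2 d1] by blast
  have "\<forall>x. \<exists>U :: complex^'b^'a. U ** M2 x = M1 x \<and> adj U ** M1 x = M2 x
           \<and> (\<forall>z. \<exists>y. adj U *v z = M2 x *v y)"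
    using gram_lemma[OF G] by blast
  then obtain U :: "'x \<Rightarrow> complex^'b^'a" where
    U: "\<And>x. U x ** M2 x = M1 x" "\<And>x. adj (U x) ** M1 x = M2 x"
       "\<And>x z. \<exists>y. adj (U x) *v z = M2 x *v y"
    by metis
  have PP: "adj (U x) ** U x ** (adj (U x) ** U x) = adj (U x) ** U x" for x
  proof (rule matrix_eq_ip)
    fix z
    obtain y where y: "adj (U x) *v (U x *v z) = M2 x *v y" using U(3) by blast
    have "(adj (U x) ** U x ** (adj (U x) ** U x)) *v z = adj (U x) *v (U x *v (M2 x *v y))"
      by (simp add: matrix_vector_mul_assoc[symmetric] y)
    also have "\<dots> = M2 x *v y"
      by (simp add: matrix_vector_mul_assoc U(1) U(2))
    finally show "(adj (U x) ** U x ** (adj (U x) ** U x)) *v z = (adj (U x) ** U x) *v z"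
      by (simp add: matrix_vector_mul_assoc[symmetric] y)
  qed
  have QM: "(mat 1 - adj (U x) ** U x) ** M2 x = 0" for x
    by (simp add: mm_diff_rdistrib matrix_mul_assoc[symmetric] U(1) U(2))
  define e :: 'a where "e = undefined"
  define R :: "'x \<Rightarrow> 'x \<Rightarrow> complex^'b^'b \<Rightarrow> complex^'a^'a" where
    "R y x = (if x = y then chan (U y) e else (\<lambda>\<sigma>. 0))" for y x
  have Rapp: "R y x \<sigma> = (if x = y then chan (U y) e \<sigma> else 0)" for y x \<sigma>
    by (simp add: R_def)
  have inst: "instrument (R y)" for y
    unfolding instrument_def
  proof (intro conjI allI impI)
    fix x
    show "clinear_map (R y x)" by (simp add: R_def chan_linear zero_linear)
    show "completely_positive (R y x)" by (simp add: R_def chan_cp zero_cp)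
  next
    fix x \<rho> assume "psd (\<rho>::complex^'b^'b)"
    then show "trace (R y x \<rho>) \<le> trace \<rho>"
      by (simp add: R_def chan_trace[OF PP] psd_trace_nonneg trace_0[simplified])
  next
    fix \<rho> :: "complex^'b^'b"
    have "(\<Sum>x\<in>UNIV. R y x \<rho>) = chan (U y) e \<rho>"
      by (simp add: Rapp)
    then show "trace (\<Sum>x\<in>UNIV. R y x \<rho>) = trace \<rho>" by (simp add: chan_trace[OF PP])
  qed
  have eq: "complementary W1 E1 x = (\<lambda>\<rho>. \<Sum>y\<in>UNIV. R y x (complementary W2 E2 y \<rho>))" for x
  proof
    fix \<rho> :: "complex^'h^'h"
    let ?K = "kron (mat 1 :: complex^'k^'k) \<rho>"
    let ?Q = "mat 1 - adj (U x) ** U x"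
    have "(\<Sum>y\<in>UNIV. R y x (complementary W2 E2 y \<rho>)) = chan (U x) e (complementary W2 E2 x \<rho>)"
      by (simp add: Rapp)
    also have "\<dots> = U x ** (M2 x ** ?K ** adj (M2 x)) ** adj (U x)
        + cscale (trace (?Q ** (M2 x ** ?K ** adj (M2 x)) ** adj ?Q)) (tau e)"
      by (simp add: chan_def C2)
    also have "?Q ** (M2 x ** ?K ** adj (M2 x)) ** adj ?Q = 0"
      by (simp add: matrix_mul_assoc QM)
    also have "U x ** (M2 x ** ?K ** adj (M2 x)) ** adj (U x) = M1 x ** ?K ** adj (M1 x)"
    proof -
      have a: "adj (M1 x) = adj (M2 x) ** adj (U x)" by (simp add: U(1)[symmetric] adj_mult)
      have "U x ** (M2 x ** ?K ** adj (M2 x)) ** adj (U x) = (U x ** M2 x) ** ?K ** (adj (M2 x) ** adj (U x))"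
        by (simp add: matrix_mul_assoc)
      then show ?thesis by (simp only: U(1) a)
    qed
    finally show "complementary W1 E1 x \<rho> = (\<Sum>y\<in>UNIV. R y x (complementary W2 E2 y \<rho>))"
      by (simp add: C1 trace_0[simplified])
  qed
  show ?thesis unfolding postproc_def using inst eq by blast
qed

theorem proposition6:
  fixes I :: "'x::finite \<Rightarrow> complex^'h^'h \<Rightarrow> complex^'k^'k"
    and W1 :: "complex^'h::finite^('a::finite \<times> 'k::finite)" and E1 :: "'x \<Rightarrow> complex^'a^'a"
    and W2 :: "complex^'h^('b::finite \<times> 'k)" and E2 :: "'x \<Rightarrow> complex^'b^'b"
  assumes "instrument I"
    and "dilation I W1 E1"
    and "dilation I W2 E2"
  shows "postproc_equiv (complementary W1 E1) (complementary W2 E2)"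
  unfolding postproc_equiv_def
  using main_dir[OF assms(2) assms(3)] main_dir[OF assms(3) assms(2)] by blast


end
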